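(* Let $W\in\mathbb{R}^{d\times d}$ be symmetric positive definite, $b\in\mathbb{R}^d$, $c\in\mathbb{R}$, and consider $\min_{x\in\mathbb{R}^d} f(x)=\frac12 x^TWx-b^Tx+c$, with unique solution $x^\star=W^{-1}b$. Let $W=Q\Lambda Q^T$ be an eigendecomposition with $Q$ orthogonal and $\Lambda$ diagonal. Consider an optimization method of the form $$x_{k+1}-x^\star = Q A Q^T (x_k-x^\star) + Q B Q^T (x_{k-1}-x^\star),\qquad k\ge 1,$$ started from arbitrary $x_0,x_1\in\mathbb{R}^d$, where $A=\mathrm{diag}(a_1,\dots,a_d)$ and $B=\mathrm{diag}(b_1,\dots,b_d)$ are real diagonal matrices (equivalently, in the coordinates $\hat x_k=Q^T(x_k-x^\star)$ the method reads $\hat x_{k+1}=A\hat x_k+B\hat x_{k-1}$, i.e. $z_{k+1}=Mz_k$ with $M=\begin{bmatrix}A & B\\ I & 0\end{bmatrix}$, $z_k=(\hat x_k,\hat x_{k-1})$). Assume the method converges to $x^\star$, and that for each $i\in\{1,\dots,d\}$ the two eigenvalues $\lambda_1^{M_i},\lambda_2^{M_i}$ of the $2\times 2$ matrix $M_i=\begin{bmatrix} a_i & b_i\\ 1 & 0\end{bmatrix}$ form a conjugate pair, i.e. $(\lambda_1^{M_i})^*=\lambda_2^{M_i}$. Then $$V(x_k,x_{k-1},x_{k-2})=\|x_{k-1}-x^\star\|^2-\langle x_k-x^\star,\,x_{k-2}-x^\star\rangle$$ is a Lyapunov function for this method.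
   Context: The method is said to converge to $x^\star$ if $x_k\to x^\star$ for every choice of initial points $x_0,x_1$. A function $V(x_k,x_{k-1},x_{k-2})$ is called a Lyapunov function for the method if, along every trajectory of the method, $V(x_k,x_{k-1},x_{k-2})\ge 0$ for all $k\ge 2$ and $V(x_{k+1},x_k,x_{k-1})\le V(x_k,x_{k-1},x_{k-2})$ for all $k\ge 2$. "Conjugate pair" means the two eigenvalues are complex conjugates of each other (this includes the case of two equal real eigenvalues). Here $\|\cdot\|$ and $\langle\cdot,\cdot\rangle$ are the Euclidean norm and inner product. *)

theory Defs
  imports "HOL-Analysis.Analysis"
begin

definition diag_mat :: "real ^ 'n \<Rightarrow> real ^ 'n ^ 'n" where
  "diag_mat v = (\<chi> i j. if i = j then v $ i else 0)"

definition is_diagonal :: "real ^ 'n ^ 'n \<Rightarrow> bool" where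
  "is_diagonal L \<longleftrightarrow> (\<forall>i j. i \<noteq> j \<longrightarrow> L $ i $ j = 0)"

definition pos_def_matrix :: "real ^ 'n ^ 'n \<Rightarrow> bool" where
  "pos_def_matrix W \<longleftrightarrow> transpose W = W \<and> (\<forall>v. v \<noteq> 0 \<longrightarrow> v \<bullet> (W *v v) > 0)"

definition M2 :: "real \<Rightarrow> real \<Rightarrow> real ^ 2 ^ 2" where
  "M2 a b = (\<chi> i j. if i = 1 then (if j = 1 then a else b) else (if j = 1 then 1 else 0))"

definition eigenvalues2 :: "real ^ 2 ^ 2 \<Rightarrow> complex \<Rightarrow> complex \<Rightarrow> bool" where
  "eigenvalues2 M l1 l2 \<longleftrightarrow>
     (\<forall>z::complex. det (mat z - (\<chi> i j. complex_of_real (M $ i $ j))) = (z - l1) * (z - l2))"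

definition conjugate_pair_eigs :: "real ^ 2 ^ 2 \<Rightarrow> bool" where
  "conjugate_pair_eigs M \<longleftrightarrow> (\<exists>l1 l2. eigenvalues2 M l1 l2 \<and> cnj l1 = l2)"

definition is_trajectory ::
  "real ^ 'n \<Rightarrow> real ^ 'n ^ 'n \<Rightarrow> real ^ 'n ^ 'n \<Rightarrow> real ^ 'n ^ 'n \<Rightarrow> (nat \<Rightarrow> real ^ 'n) \<Rightarrow> bool" where
  "is_trajectory xs Q A B x \<longleftrightarrow>
     (\<forall>k\<ge>1. x (Suc k) - xs = (Q ** A ** transpose Q) *v (x k - xs)
                            + (Q ** B ** transpose Q) *v (x (k - 1) - xs))"

definition is_lyapunov ::
  "((nat \<Rightarrow> real ^ 'n) \<Rightarrow> bool) \<Rightarrow> (real ^ 'n \<Rightarrow> real ^ 'n \<Rightarrow> real ^ 'n \<Rightarrow> real) \<Rightarrow> bool" where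
  "is_lyapunov traj V \<longleftrightarrow>
     (\<forall>x. traj x \<longrightarrow>
        (\<forall>k\<ge>2. V (x k) (x (k - 1)) (x (k - 2)) \<ge> 0 \<and>
                V (x (Suc k)) (x k) (x (k - 1)) \<le> V (x k) (x (k - 1)) (x (k - 2))))"

end

theory Submission imports Defs begin

lemma diag_mult_nth: "(diag_mat a *v v) $ j = a $ j * v $ j"
  unfolding matrix_vector_mult_def diag_mat_def by (simp add: if_distrib[of "\<lambda>x. x * _"] cong: if_cong)

lemma orth_inner:
  assumes "orthogonal_matrix (Q::real^'n^'n)"
  shows "(Q *v u) \<bullet> (Q *v v) = u \<bullet> v"
proof -
  have "(Q *v u) \<bullet> (Q *v v) = (u v* transpose Q) \<bullet> (Q *v v)" by simp
  also have "\<dots> = u \<bullet> (transpose Q *v (Q *v v))" by (rule dot_lmul_matrix)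
  also have "\<dots> = u \<bullet> v" using assms
    by (simp only: matrix_vector_mul_assoc orthogonal_matrix_def matrix_vector_mul_lid)
  finally show ?thesis .
qed

lemma conj_facts:
  assumes "conjugate_pair_eigs (M2 a b)"
  shows "b \<le> 0 \<and> a^2 \<le> -4*b"
proof -
  obtain l where h: "\<forall>z::complex. det (mat z - (\<chi> i j. complex_of_real (M2 a b $ i $ j))) = (z - l) * (z - cnj l)"
    using assms unfolding conjugate_pair_eigs_def eigenvalues2_def by blast
  have d: "det (mat z - (\<chi> i j. complex_of_real (M2 a b $ i $ j))) = z^2 - a*z - b" for z
    by (simp add: det_2 M2_def mat_def power2_eq_square algebra_simps)
  have e: "z^2 - a*z - b = (z - l) * (z - cnj l)" for z using h d by metis
  have 0: "- complex_of_real b = l * cnj l" using e[of 0] by simp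
  have 1: "1 - complex_of_real a - b = (1 - l) * (1 - cnj l)" using e[of 1] by simp
  have bb: "-b = (Re l)^2 + (Im l)^2" using arg_cong[OF 0, of Re]
    by (simp add: power2_eq_square)
  have aa: "a = 2 * Re l" using arg_cong[OF 1, of Re] bb
    by (simp add: algebra_simps power2_eq_square) 
  show ?thesis using bb aa by (auto simp: power2_eq_square) (smt (verit) zero_le_square)
qed

lemma scalar_step:
  fixes a b p0 p1 p2 p3 :: real
  assumes "b \<le> 0" "a^2 \<le> -4*b" "-b \<le> 1" "p2 = a*p1 + b*p0" "p3 = a*p2 + b*p1"
  shows "0 \<le> p1*p1 - p2*p0 \<and> p2*p2 - p3*p1 \<le> p1*p1 - p2*p0"
proof -
  have v: "p1*p1 - p2*p0 = ((2*p1 - a*p0)^2 + (-4*b - a^2)*p0^2) / 4"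
    using assms(4) by (simp add: power2_eq_square field_simps)
  have "0 \<le> (2*p1 - a*p0)^2 + (-4*b - a^2)*p0^2" using assms(2) by simp
  hence nn: "0 \<le> p1*p1 - p2*p0" unfolding v by simp
  have "p2*p2 - p3*p1 = (-b) * (p1*p1 - p2*p0)" using assms(4,5) by (simp add: algebra_simps)
  also have "\<dots> \<le> 1 * (p1*p1 - p2*p0)" using nn assms(3) by (intro mult_right_mono) auto
  finally show ?thesis using nn by simp
qed

lemma conj_mult:
  assumes "orthogonal_matrix (Q::real^'n^'n)"
  shows "(Q ** D ** transpose Q) *v (Q *v v) = Q *v (D *v v)"
proof -
  have "Q ** D ** transpose Q ** Q = Q ** D"
    by (metis matrix_mul_assoc matrix_mul_rid orthogonal_matrix_def assms)
  thus ?thesis by (simp add: matrix_vector_mul_assoc)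
qed

fun sq :: "real \<Rightarrow> real \<Rightarrow> nat \<Rightarrow> real" where
  "sq a b 0 = 0" | "sq a b (Suc 0) = 1" | "sq a b (Suc (Suc k)) = a * sq a b (Suc k) + b * sq a b k"

lemma b_bound:
  fixes Q :: "real^'n^'n" and xs a bb :: "real^'n"
  assumes Q: "orthogonal_matrix Q"
    and conv: "\<forall>x. is_trajectory xs Q (diag_mat a) (diag_mat bb) x \<longrightarrow> x \<longlonglongrightarrow> xs"
  shows "- bb $ i \<le> 1"
proof (rule ccontr)
  assume nb: "\<not> - bb $ i \<le> 1"
  define s where "s = sq (a$i) (bb$i)"
  define e :: "real^'n" where "e = axis i 1"
  define x where "x = (\<lambda>k. xs + Q *v (s k *s e))"
  have dm: "diag_mat c *v (t *s e) = (c$i * t) *s e" for c t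
    by (simp add: vec_eq_iff diag_mult_nth e_def axis_def)
  have tr: "is_trajectory xs Q (diag_mat a) (diag_mat bb) x"
    unfolding is_trajectory_def
  proof (intro allI impI)
    fix k :: nat assume "1 \<le> k"
    then obtain m where k: "k = Suc m" by (cases k) auto
    have "(Q ** diag_mat a ** transpose Q) *v (x k - xs) + (Q ** diag_mat bb ** transpose Q) *v (x (k - 1) - xs)
      = Q *v (diag_mat a *v (s k *s e)) + Q *v (diag_mat bb *v (s (k-1) *s e))"
      unfolding x_def using Q by (simp add: conj_mult)
    also have "\<dots> = Q *v ((a$i * s k) *s e + (bb$i * s (k-1)) *s e)"
      by (simp add: dm matrix_vector_right_distrib)
    also have "\<dots> = Q *v (s (Suc k) *s e)"
      unfolding k s_def by (cases m) (simp_all add: scaleR_add_left[symmetric])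
    finally show "x (Suc k) - xs = (Q ** diag_mat a ** transpose Q) *v (x k - xs) + (Q ** diag_mat bb ** transpose Q) *v (x (k - 1) - xs)"
      unfolding x_def by simp
  qed
  hence "x \<longlonglongrightarrow> xs" using conv by blast
  hence "(\<lambda>k. norm (x k - xs)) \<longlonglongrightarrow> 0"
    using Lim_null tendsto_norm_zero by blast
  moreover have "norm (x k - xs) = \<bar>s k\<bar>" for k
  proof -
    have "norm (x k - xs) = norm (Q *v (s k *s e))" unfolding x_def by simp
    also have "\<dots> = norm (s k *s e)" by (simp add: norm_eq_sqrt_inner orth_inner[OF Q])
    also have "\<dots> = \<bar>s k\<bar>" by (simp add: e_def scalar_mult_eq_scaleR)
    finally show ?thesis .
  qed
  ultimately have "(\<lambda>k. \<bar>s k\<bar>) \<longlonglongrightarrow> 0" by simp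
  hence s0: "s \<longlonglongrightarrow> 0" by (simp add: tendsto_rabs_zero_iff)
  define w where "w = (\<lambda>k. s (Suc k) * s (Suc k) - s (Suc (Suc k)) * s k)"
  have "w \<longlonglongrightarrow> 0 * 0 - 0 * 0"
    unfolding w_def
    by (intro tendsto_intros s0 LIMSEQ_Suc)
  hence w0: "w \<longlonglongrightarrow> 0" by simp
  have wk: "w k = (- bb$i) ^ k" for k
  proof (induction k)
    case 0 then show ?case by (simp add: w_def s_def)
  next
    case (Suc k)
    have "w (Suc k) = (- bb$i) * w k" unfolding w_def s_def by (simp add: algebra_simps)
    then show ?case using Suc by simp
  qed
  have "\<forall>k\<ge>0. 1 \<le> w k" using nb by (simp add: wk one_le_power)
  hence "1 \<le> (0::real)" using LIMSEQ_le_const[OF w0] by blast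
  thus False by simp
qed


theorem theorem2:
  fixes W Q \<Lambda> :: "real ^ 'n ^ 'n"
    and b :: "real ^ 'n" and c :: real
    and a bb :: "real ^ 'n"
  defines "xs \<equiv> matrix_inv W *v b"
  assumes W_pd: "pos_def_matrix W"
    and Q_orth: "orthogonal_matrix Q"
    and L_diag: "is_diagonal \<Lambda>"
    and eig: "W = Q ** \<Lambda> ** transpose Q"
    and conv: "\<forall>x. is_trajectory xs Q (diag_mat a) (diag_mat bb) x \<longrightarrow> x \<longlonglongrightarrow> xs"
    and conj: "\<forall>i. conjugate_pair_eigs (M2 (a $ i) (bb $ i))"
  shows "is_lyapunov (is_trajectory xs Q (diag_mat a) (diag_mat bb))
           (\<lambda>xk xk1 xk2. (norm (xk1 - xs))\<^sup>2 - (xk - xs) \<bullet> (xk2 - xs))"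
  unfolding is_lyapunov_def
proof (intro allI impI)
  fix x and k :: nat assume tr: "is_trajectory xs Q (diag_mat a) (diag_mat bb) x" and k2: "2 \<le> k"
  have QQt: "Q ** transpose Q = mat 1" and QtQ: "transpose Q ** Q = mat 1"
    using Q_orth by (auto simp: orthogonal_matrix_def)
  define y where "y = (\<lambda>j. transpose Q *v (x j - xs))"
  have u: "x j - xs = Q *v y j" for j
    by (simp only: y_def matrix_vector_mul_assoc QQt matrix_vector_mul_lid)
  have inn: "(x j - xs) \<bullet> (x l - xs) = (\<Sum>i\<in>UNIV. y j $ i * y l $ i)" for j l
    unfolding u orth_inner[OF Q_orth] by (simp add: inner_vec_def)
  have rec: "y (Suc m) $ i = a$i * y m $ i + bb$i * y (m-1) $ i" if "1 \<le> m" for m i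
  proof -
    have e0: "x (Suc m) - xs = (Q ** diag_mat a ** transpose Q) *v (x m - xs) + (Q ** diag_mat bb ** transpose Q) *v (x (m-1) - xs)"
      using tr that unfolding is_trajectory_def by blast
    have "x (Suc m) - xs = (Q ** diag_mat a ** transpose Q) *v (Q *v y m) + (Q ** diag_mat bb ** transpose Q) *v (Q *v y (m-1))"
      using e0 by (metis u)
    hence "x (Suc m) - xs = Q *v (diag_mat a *v y m) + Q *v (diag_mat bb *v y (m-1))"
      by (simp only: conj_mult[OF Q_orth])
    moreover have "y (Suc m) = transpose Q *v (x (Suc m) - xs)" by (simp add: y_def)
    moreover have QtQv: "transpose Q *v (Q *v v) = v" for v
      by (simp only: matrix_vector_mul_assoc QtQ matrix_vector_mul_lid)
    ultimately have "y (Suc m) = diag_mat a *v y m + diag_mat bb *v y (m-1)"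
      by (simp only: matrix_vector_right_distrib QtQv)
    thus ?thesis by (simp add: diag_mult_nth)
  qed
  obtain m where km: "k = Suc (Suc m)" using k2 by (metis add_2_eq_Suc le_Suc_ex)
  have step: "0 \<le> y (Suc m) $ i * y (Suc m) $ i - y (Suc (Suc m)) $ i * y m $ i \<and>
     y (Suc (Suc m)) $ i * y (Suc (Suc m)) $ i - y (Suc (Suc (Suc m))) $ i * y (Suc m) $ i
     \<le> y (Suc m) $ i * y (Suc m) $ i - y (Suc (Suc m)) $ i * y m $ i" for i
  proof -
    have cf: "bb$i \<le> 0 \<and> (a$i)^2 \<le> -4*bb$i" using conj conj_facts by blast
    have bd: "- bb$i \<le> 1" using b_bound[OF Q_orth conv] .
    show ?thesis
      by (rule scalar_step[of "bb$i" "a$i"]) (use cf bd rec[of "Suc m" i] rec[of "Suc (Suc m)" i] in auto)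
  qed
  have V: "(norm (x (j+1) - xs))\<^sup>2 - (x (j+2) - xs) \<bullet> (x j - xs) =
      (\<Sum>i\<in>UNIV. y (j+1) $ i * y (j+1) $ i - y (j+2) $ i * y j $ i)" for j
    by (simp add: power2_norm_eq_inner inn sum_subtractf)
  show "0 \<le> (norm (x (k - 1) - xs))\<^sup>2 - (x k - xs) \<bullet> (x (k - 2) - xs) \<and>
         (norm (x k - xs))\<^sup>2 - (x (Suc k) - xs) \<bullet> (x (k - 1) - xs)
         \<le> (norm (x (k - 1) - xs))\<^sup>2 - (x k - xs) \<bullet> (x (k - 2) - xs)"
    using V[of m] V[of "Suc m"] step unfolding km
    by (auto intro!: sum_nonneg sum_mono)
qed

end
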